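(* Let $(V,\|\cdot\|,V_+)$ be a normal ordered vector space and $S\subseteq V$ a linear subspace, regarded as a normal ordered vector space with the restricted norm and cone $S_+=S\cap V_+$. Then every positive contractive linear functional $f:S\to\mathbb{R}$ has a positive contractive linear extension $\tilde f:V\to\mathbb{R}$ if and only if $d_V(x)=d_S(x)$ for all $x\in S$.
   Context: A normed ordered vector space $(V,\|\cdot\|,V_+)$ is a real normed vector space with a closed proper cone $V_+$ (closed under sums and nonnegative scalings, $V_+\cap(-V_+)=\{0\}$); $x\le y$ iff $y-x\in V_+$. It is normal if $x\le y\le z$ implies $\|y\|\le\max\{\|x\|,\|z\|\}$. For a normed ordered vector space $W$, $d_W(x)=\inf\{\|x+p\|:p\in W_+\}$; thus $d_S(x)=\inf\{\|x+p\|:p\in S\cap V_+\}$ and $d_V(x)=\inf\{\|x+p\|:p\in V_+\}$. A functional is positive if it is nonnegative on the cone and contractive if its norm is at most 1. *)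

theory Defs
  imports "HOL-Analysis.Analysis"
begin

definition closed_proper_cone :: "'a::real_normed_vector set \<Rightarrow> bool" where
  "closed_proper_cone P \<longleftrightarrow> closed P \<and> 0 \<in> P \<and>
     (\<forall>x\<in>P. \<forall>y\<in>P. x + y \<in> P) \<and>
     (\<forall>c::real. \<forall>x\<in>P. c \<ge> 0 \<longrightarrow> c *\<^sub>R x \<in> P) \<and>
     P \<inter> uminus ` P = {0}"

definition normal_cone :: "'a::real_normed_vector set \<Rightarrow> bool" where
  "normal_cone P \<longleftrightarrow>
     (\<forall>x y z. y - x \<in> P \<and> z - y \<in> P \<longrightarrow> norm y \<le> max (norm x) (norm z))"

text \<open>d_W(x) = inf { norm (x + p) : p \<in> W_+ }, where C is the cone W_+.\<close>
definition cone_dist :: "'a::real_normed_vector set \<Rightarrow> 'a \<Rightarrow> real" where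
  "cone_dist C x = Inf ((\<lambda>p. norm (x + p)) ` C)"

text \<open>f is a positive contractive linear functional on the subspace S
  (with cone S \<inter> P and restricted norm); values of f outside S are irrelevant.\<close>
definition pos_contr_functional :: "'a::real_normed_vector set \<Rightarrow> 'a set \<Rightarrow> ('a \<Rightarrow> real) \<Rightarrow> bool" where
  "pos_contr_functional S P f \<longleftrightarrow>
     (\<forall>x\<in>S. \<forall>y\<in>S. f (x + y) = f x + f y) \<and>
     (\<forall>c::real. \<forall>x\<in>S. f (c *\<^sub>R x) = c * f x) \<and>
     (\<forall>p\<in>S \<inter> P. 0 \<le> f p) \<and>
     (\<forall>x\<in>S. \<bar>f x\<bar> \<le> norm x)"

end

theory Submission imports Defs begin

definition hb_good :: "('a::real_vector \<Rightarrow> real) \<Rightarrow> 'a set \<Rightarrow> ('a \<Rightarrow> real) \<Rightarrow> ('a \<times> real) set \<Rightarrow> bool" where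
 "hb_good p S f G \<longleftrightarrow>
   (\<forall>x a b. (x,a)\<in>G \<longrightarrow> (x,b)\<in>G \<longrightarrow> a = b) \<and>
   (\<forall>x a y b. (x,a)\<in>G \<longrightarrow> (y,b)\<in>G \<longrightarrow> (x+y,a+b)\<in>G) \<and>
   (\<forall>c x a. (x,a)\<in>G \<longrightarrow> (c *\<^sub>R x, c*a)\<in>G) \<and>
   (\<forall>x a. (x,a)\<in>G \<longrightarrow> a \<le> p x) \<and>
   (\<forall>x\<in>S. (x, f x)\<in>G)"

lemma hb_step:
  fixes p :: "'a::real_vector \<Rightarrow> real"
  assumes padd: "\<And>x y. p (x+y) \<le> p x + p y"
  and pscale: "\<And>c x. c > 0 \<Longrightarrow> p (c *\<^sub>R x) = c * p x"
  and g: "hb_good p S f M" and S0: "0 \<in> S"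
  and x0: "\<And>a. (x0,a) \<notin> M"
  shows "\<exists>M'. hb_good p S f M' \<and> M \<subset> M'"
proof -
  have fn1: "\<And>x a b. (x,a)\<in>M \<Longrightarrow> (x,b)\<in>M \<Longrightarrow> a = b"
   and add: "\<And>x a y b. (x,a)\<in>M \<Longrightarrow> (y,b)\<in>M \<Longrightarrow> (x+y,a+b)\<in>M"
   and scl: "\<And>c x a. (x,a)\<in>M \<Longrightarrow> (c *\<^sub>R x, c*a)\<in>M"
   and bnd: "\<And>x a. (x,a)\<in>M \<Longrightarrow> a \<le> p x"
   and ext: "\<And>x. x\<in>S \<Longrightarrow> (x, f x)\<in>M"
    using g unfolding hb_good_def by blast+
  have M0: "(0,0) \<in> M" using scl[OF ext[OF S0], of 0] by simp
  define L where "L = (\<lambda>(u,b). b - p (u - x0)) ` M"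
  define c where "c = Sup L"
  have key: "b - p (u - x0) \<le> p (v + x0) - b'" if "(u,b)\<in>M" "(v,b')\<in>M" for u b v b'
  proof -
    have "b + b' \<le> p (u + v)" using bnd[OF add[OF that]] .
    also have "p (u + v) = p ((u - x0) + (v + x0))" by (simp add: algebra_simps)
    also have "\<dots> \<le> p (u - x0) + p (v + x0)" by (rule padd)
    finally show ?thesis by simp
  qed
  have Lne: "L \<noteq> {}" using M0 unfolding L_def by blast
  have Lbdd: "bdd_above L" unfolding L_def bdd_above_def
    using key[OF _ M0] by fastforce
  have cge: "b - p (u - x0) \<le> c" if "(u,b)\<in>M" for u b
    unfolding c_def by (rule cSup_upper[OF _ Lbdd]) (use that L_def in force)
  have cle: "c \<le> p (v + x0) - b'" if "(v,b')\<in>M" for v b'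
    unfolding c_def by (rule cSup_least[OF Lne]) (use key[OF _ that] L_def in auto)
  define M' where "M' = {(y + t *\<^sub>R x0, a + t * c) | y a t. (y,a)\<in>M}"
  have inM': "(y + t *\<^sub>R x0, a + t * c) \<in> M'" if "(y,a)\<in>M" for y a t
    using that unfolding M'_def by blast
  have sub: "M \<subseteq> M'" using inM'[where t=0] by force
  have new: "(x0, c) \<in> M'" using inM'[OF M0, of 1] by simp
  have neq: "M \<noteq> M'" using new x0 by blast
  have good': "hb_good p S f M'"
    unfolding hb_good_def
  proof (intro conjI allI impI ballI)
    fix x a b assume "(x,a)\<in>M'" "(x,b)\<in>M'"
    then obtain y1 a1 t1 y2 a2 t2 where h: "(y1,a1)\<in>M" "(y2,a2)\<in>M" "x = y1 + t1 *\<^sub>R x0" "a = a1 + t1*c"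
       "x = y2 + t2 *\<^sub>R x0" "b = a2 + t2*c" unfolding M'_def by blast
    have "t1 = t2"
    proof (rule ccontr)
      assume ne: "t1 \<noteq> t2"
      have "(y1 + (-1) *\<^sub>R y2, a1 + (-1)*a2) \<in> M" using add[OF h(1) scl[OF h(2)]] .
      from scl[OF this, of "1/(t2-t1)"] have "((1/(t2-t1)) *\<^sub>R (y1 - y2), (1/(t2-t1)) * (a1 - a2)) \<in> M"
        by simp
      moreover have "(1/(t2-t1)) *\<^sub>R (y1 - y2) = x0"
      proof -
        have "y1 - y2 = (t2 - t1) *\<^sub>R x0" using h(3,5) by (simp add: algebra_simps)
        thus ?thesis using ne by simp
      qed
      ultimately show False using x0 by metis
    qed
    with h have "y1 = y2" by simp
    with h \<open>t1 = t2\<close> fn1 show "a = b" by blast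
  next
    fix x a y b assume "(x,a)\<in>M'" "(y,b)\<in>M'"
    then obtain y1 a1 t1 y2 a2 t2 where h: "(y1,a1)\<in>M" "(y2,a2)\<in>M" "x = y1 + t1 *\<^sub>R x0" "a = a1 + t1*c"
       "y = y2 + t2 *\<^sub>R x0" "b = a2 + t2*c" unfolding M'_def by blast
    have "(y1+y2 + (t1+t2) *\<^sub>R x0, (a1+a2) + (t1+t2)*c) \<in> M'" by (rule inM'[OF add[OF h(1,2)]])
    thus "(x+y, a+b) \<in> M'" using h by (simp add: algebra_simps)
  next
    fix d x a assume "(x,a)\<in>M'"
    then obtain y1 a1 t1 where h: "(y1,a1)\<in>M" "x = y1 + t1 *\<^sub>R x0" "a = a1 + t1*c"
      unfolding M'_def by blast
    have "(d *\<^sub>R y1 + (d*t1) *\<^sub>R x0, d*a1 + (d*t1)*c) \<in> M'" by (rule inM'[OF scl[OF h(1)]])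
    thus "(d *\<^sub>R x, d*a) \<in> M'" using h by (simp add: algebra_simps)
  next
    fix x a assume "(x,a)\<in>M'"
    then obtain y a1 t where h: "(y,a1)\<in>M" "x = y + t *\<^sub>R x0" "a = a1 + t*c"
      unfolding M'_def by blast
    show "a \<le> p x"
    proof (cases "t = 0")
      case True thus ?thesis using h bnd by simp
    next
      case False
      show ?thesis
      proof (cases "t > 0")
        case True
        have m: "((1/t) *\<^sub>R y, (1/t)*a1) \<in> M" by (rule scl[OF h(1)])
        have "c \<le> p ((1/t) *\<^sub>R y + x0) - (1/t)*a1" by (rule cle[OF m])
        hence "t * c \<le> t * (p ((1/t) *\<^sub>R y + x0) - (1/t)*a1)" using True
          by (simp add: mult_left_mono)
        hence "t * c \<le> t * p ((1/t) *\<^sub>R y + x0) - a1" using True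
          by (simp add: right_diff_distrib)
        also have "t * p ((1/t) *\<^sub>R y + x0) = p (t *\<^sub>R ((1/t) *\<^sub>R y + x0))"
          using pscale[OF True] by simp
        also have "t *\<^sub>R ((1/t) *\<^sub>R y + x0) = x" using h True by (simp add: algebra_simps)
        finally show ?thesis using h by simp
      next
        case False
        hence tn: "t < 0" using \<open>t \<noteq> 0\<close> by simp
        define s where "s = -t"
        have sp: "s > 0" using tn s_def by simp
        have m: "((1/s) *\<^sub>R y, (1/s)*a1) \<in> M" by (rule scl[OF h(1)])
        have "(1/s)*a1 - p ((1/s) *\<^sub>R y - x0) \<le> c" by (rule cge[OF m])
        hence "s * ((1/s)*a1 - p ((1/s) *\<^sub>R y - x0)) \<le> s * c" using sp
          by (simp add: mult_left_mono)
        hence "a1 - s * p ((1/s) *\<^sub>R y - x0) \<le> s * c" using sp by (simp add: algebra_simps)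
        also have "s * p ((1/s) *\<^sub>R y - x0) = p (s *\<^sub>R ((1/s) *\<^sub>R y - x0))"
          using pscale[OF sp] by simp
        also have "s *\<^sub>R ((1/s) *\<^sub>R y - x0) = x" using h sp s_def by (simp add: algebra_simps)
        finally show ?thesis using h s_def by simp
      qed
    qed
  next
    fix x assume "x \<in> S" thus "(x, f x) \<in> M'" using ext sub by blast
  qed
  show ?thesis using good' sub neq by blast
qed

lemma hahn_banach_alg:
  fixes p :: "'a::real_vector \<Rightarrow> real"
  assumes S: "subspace S"
  and padd: "\<And>x y. p (x+y) \<le> p x + p y"
  and pscale: "\<And>c x. c > 0 \<Longrightarrow> p (c *\<^sub>R x) = c * p x"
  and fadd: "\<And>x y. x\<in>S \<Longrightarrow> y\<in>S \<Longrightarrow> f (x+y) = f x + f y"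
  and fscale: "\<And>c x. x\<in>S \<Longrightarrow> f (c *\<^sub>R x) = c * f x"
  and fp: "\<And>x. x\<in>S \<Longrightarrow> f x \<le> p x"
  shows "\<exists>g. linear g \<and> (\<forall>x. g x \<le> p x) \<and> (\<forall>x\<in>S. g x = f x)"
proof -
  have S0: "0 \<in> S" using S by (simp add: subspace_0)
  define G0 where "G0 = (\<lambda>x. (x, f x)) ` S"
  have G0: "hb_good p S f G0" unfolding hb_good_def G0_def
  proof (intro conjI allI impI ballI)
    fix x a y b assume "(x,a) \<in> (\<lambda>x. (x, f x)) ` S" "(y,b) \<in> (\<lambda>x. (x, f x)) ` S"
    thus "(x+y, a+b) \<in> (\<lambda>x. (x, f x)) ` S" using fadd S by (auto intro!: image_eqI subspace_add)
  next
    fix c x a assume "(x,a) \<in> (\<lambda>x. (x, f x)) ` S"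
    thus "(c *\<^sub>R x, c*a) \<in> (\<lambda>x. (x, f x)) ` S" using fscale S by (auto intro!: image_eqI subspace_scale)
  qed (use fp in auto)
  have "\<forall>C\<in>chains {G. hb_good p S f G}. \<exists>U\<in>{G. hb_good p S f G}. \<forall>X\<in>C. X \<subseteq> U"
  proof
    fix C assume C: "C \<in> chains {G. hb_good p S f G}"
    show "\<exists>U\<in>{G. hb_good p S f G}. \<forall>X\<in>C. X \<subseteq> U"
    proof (cases "C = {}")
      case True thus ?thesis using G0 by auto
    next
      case False
      have gd: "\<And>X. X \<in> C \<Longrightarrow> hb_good p S f X" using chainsD2[OF C] by auto
      have ch: "\<And>X Y. X \<in> C \<Longrightarrow> Y \<in> C \<Longrightarrow> X \<subseteq> Y \<or> Y \<subseteq> X" using chainsD[OF C] by blast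
      have two: "\<exists>Z\<in>C. u \<in> Z \<and> v \<in> Z" if "u \<in> \<Union>C" "v \<in> \<Union>C" for u v
        using that ch by blast
      have "hb_good p S f (\<Union>C)" unfolding hb_good_def
      proof (intro conjI allI impI ballI)
        fix x a b assume "(x,a) \<in> \<Union>C" "(x,b) \<in> \<Union>C"
        then obtain Z where "Z\<in>C" "(x,a)\<in>Z" "(x,b)\<in>Z" using two by blast
        thus "a = b" using gd unfolding hb_good_def by blast
      next
        fix x a y b assume "(x,a) \<in> \<Union>C" "(y,b) \<in> \<Union>C"
        then obtain Z where "Z\<in>C" "(x,a)\<in>Z" "(y,b)\<in>Z" using two by blast
        thus "(x+y,a+b) \<in> \<Union>C" using gd unfolding hb_good_def by blast
      next
        fix c x a assume "(x,a) \<in> \<Union>C"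
        thus "(c *\<^sub>R x, c*a) \<in> \<Union>C" using gd unfolding hb_good_def by blast
      next
        fix x a assume "(x,a) \<in> \<Union>C"
        thus "a \<le> p x" using gd unfolding hb_good_def by blast
      next
        fix x assume "x \<in> S"
        thus "(x, f x) \<in> \<Union>C" using gd False unfolding hb_good_def by blast
      qed
      thus ?thesis by auto
    qed
  qed
  from Zorn_Lemma2[OF this] obtain M where M: "hb_good p S f M"
    and max: "\<And>X. hb_good p S f X \<Longrightarrow> M \<subseteq> X \<Longrightarrow> X = M" by auto
  have tot: "\<exists>a. (x,a) \<in> M" for x
  proof (rule ccontr)
    assume "\<not> (\<exists>a. (x,a) \<in> M)"
    then obtain M' where "hb_good p S f M'" "M \<subset> M'"
      using hb_step[OF padd pscale M S0] by blast
    thus False using max by blast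
  qed
  have fn1: "\<And>x a b. (x,a)\<in>M \<Longrightarrow> (x,b)\<in>M \<Longrightarrow> a = b"
   and add: "\<And>x a y b. (x,a)\<in>M \<Longrightarrow> (y,b)\<in>M \<Longrightarrow> (x+y,a+b)\<in>M"
   and scl: "\<And>c x a. (x,a)\<in>M \<Longrightarrow> (c *\<^sub>R x, c*a)\<in>M"
   and bnd: "\<And>x a. (x,a)\<in>M \<Longrightarrow> a \<le> p x"
   and ext: "\<And>x. x\<in>S \<Longrightarrow> (x, f x)\<in>M"
    using M unfolding hb_good_def by blast+
  define g where "g x = (SOME a. (x,a) \<in> M)" for x
  have gM: "(x, g x) \<in> M" for x unfolding g_def using tot by (metis someI_ex)
  have gi: "g x = a" if "(x,a) \<in> M" for x a using fn1[OF gM that] .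
  have "linear g"
  proof (rule linearI)
    fix x y show "g (x+y) = g x + g y" using gi[OF add[OF gM gM]] .
  next
    fix r x show "g (r *\<^sub>R x) = r *\<^sub>R g x" using gi[OF scl[OF gM]] by simp
  qed
  moreover have "\<forall>x. g x \<le> p x" using bnd[OF gM] by blast
  moreover have "\<forall>x\<in>S. g x = f x" using gi[OF ext] by blast
  ultimately show ?thesis by blast
qed

locale cvx_cone =
  fixes C :: "'a::real_normed_vector set"
  assumes c0: "0 \<in> C" and cadd: "\<And>x y. x\<in>C \<Longrightarrow> y\<in>C \<Longrightarrow> x+y\<in>C"
    and cscl: "\<And>c x. c \<ge> 0 \<Longrightarrow> x\<in>C \<Longrightarrow> c *\<^sub>R x\<in>C"
begin

lemma cd_bdd: "bdd_below ((\<lambda>p. norm (x + p)) ` C)"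
  by (rule bdd_belowI[of _ 0]) auto

lemma cd_lower: "q \<in> C \<Longrightarrow> cone_dist C x \<le> norm (x + q)"
  unfolding cone_dist_def by (rule cInf_lower[OF _ cd_bdd]) auto

lemma cd_greatest: "(\<And>q. q\<in>C \<Longrightarrow> a \<le> norm (x+q)) \<Longrightarrow> a \<le> cone_dist C x"
  unfolding cone_dist_def by (rule cInf_greatest) (use c0 in auto)

lemma cd_nonneg: "0 \<le> cone_dist C x"
  by (rule cd_greatest) auto

lemma cd_norm: "cone_dist C x \<le> norm x"
  using cd_lower[OF c0] by simp

lemma cd_add: "cone_dist C (x+y) \<le> cone_dist C x + cone_dist C y"
proof -
  have "cone_dist C (x+y) - cone_dist C y \<le> norm (x+p)" if p: "p\<in>C" for p
  proof -
    have "cone_dist C (x+y) - norm (x+p) \<le> norm (y+q)" if q: "q\<in>C" for q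
    proof -
      have "cone_dist C (x+y) \<le> norm ((x+y) + (p+q))" by (rule cd_lower[OF cadd[OF p q]])
      also have "\<dots> \<le> norm (x+p) + norm (y+q)"
        using norm_triangle_ineq[of "x+p" "y+q"] by (simp add: algebra_simps)
      finally show ?thesis by simp
    qed
    hence "cone_dist C (x+y) - norm (x+p) \<le> cone_dist C y" by (rule cd_greatest)
    thus ?thesis by simp
  qed
  hence "cone_dist C (x+y) - cone_dist C y \<le> cone_dist C x" by (rule cd_greatest)
  thus ?thesis by simp
qed

lemma cd_scale: assumes c: "c > 0" shows "cone_dist C (c *\<^sub>R x) = c * cone_dist C x"
proof (rule antisym)
  have "cone_dist C (c *\<^sub>R x) / c \<le> norm (x + q)" if q: "q\<in>C" for q
  proof -
    have "cone_dist C (c *\<^sub>R x) \<le> norm (c *\<^sub>R x + c *\<^sub>R q)" by (rule cd_lower[OF cscl[OF _ q]]) (use c in simp)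
    also have "\<dots> = c * norm (x + q)" using c by (simp add: scaleR_add_right[symmetric])
    finally show ?thesis using c by (simp add: field_simps)
  qed
  hence "cone_dist C (c *\<^sub>R x) / c \<le> cone_dist C x" by (rule cd_greatest)
  thus "cone_dist C (c *\<^sub>R x) \<le> c * cone_dist C x" using c by (simp add: field_simps)
next
  have "c * cone_dist C x \<le> norm (c *\<^sub>R x + q)" if q: "q\<in>C" for q
  proof -
    have "cone_dist C x \<le> norm (x + (1/c) *\<^sub>R q)" by (rule cd_lower[OF cscl[OF _ q]]) (use c in simp)
    hence "c * cone_dist C x \<le> c * norm (x + (1/c) *\<^sub>R q)" using c by simp
    also have "c * norm (x + (1/c) *\<^sub>R q) = norm (c *\<^sub>R (x + (1/c) *\<^sub>R q))" using c by simp
    also have "c *\<^sub>R (x + (1/c) *\<^sub>R q) = c *\<^sub>R x + q" using c by (simp add: scaleR_add_right)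
    finally show ?thesis .
  qed
  thus "c * cone_dist C x \<le> cone_dist C (c *\<^sub>R x)" by (rule cd_greatest)
qed

lemma cd_pos: assumes g: "linear g" and le: "\<And>x. g x \<le> cone_dist C x" and q: "q \<in> C"
  shows "0 \<le> g q"
proof -
  have "g (-q) \<le> norm (-q + q)" using le[of "-q"] cd_lower[OF q, of "-q"] by linarith
  thus ?thesis using linear_neg[OF g, of q] by simp
qed

lemma cd_contr: assumes g: "linear g" and le: "\<And>x. g x \<le> cone_dist C x"
  shows "\<bar>g x\<bar> \<le> norm x"
proof -
  have "g x \<le> norm x" using le[of x] cd_norm[of x] by linarith
  moreover have "g (-x) \<le> norm (-x)" using le[of "-x"] cd_norm[of "-x"] by linarith
  ultimately show ?thesis using linear_neg[OF g, of x] by simp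
qed

end


theorem mainTheorem7:
  fixes P :: "'a::real_normed_vector set" and S :: "'a set"
  assumes "closed_proper_cone P"
    and "normal_cone P"
    and "subspace S"
  shows "(\<forall>f. pos_contr_functional S P f \<longrightarrow>
            (\<exists>g. linear g \<and> pos_contr_functional UNIV P g \<and> (\<forall>x\<in>S. g x = f x)))
         \<longleftrightarrow> (\<forall>x\<in>S. cone_dist P x = cone_dist (S \<inter> P) x)"
proof -
  note S = assms(3)
  interpret cP: cvx_cone P
    using assms(1) unfolding closed_proper_cone_def by unfold_locales auto
  interpret cS: cvx_cone "S \<inter> P"
    using assms(1) S unfolding closed_proper_cone_def
    by unfold_locales (auto simp: subspace_0 subspace_add subspace_scale)
  have triv: "cone_dist P x \<le> cone_dist (S \<inter> P) x" for x
    by (rule cS.cd_greatest) (simp add: cP.cd_lower)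
  have lin_pc: "pos_contr_functional UNIV P g" if g: "linear g" and le: "\<And>x. g x \<le> cone_dist P x" for g
    unfolding pos_contr_functional_def
    using linear_add[OF g] linear_scale[OF g] cP.cd_pos[OF g le] cP.cd_contr[OF g le] by auto
  have lin_pcS: "pos_contr_functional S P g" if g: "linear g" and le: "\<And>x. g x \<le> cone_dist (S \<inter> P) x" for g
    unfolding pos_contr_functional_def
    using linear_add[OF g] linear_scale[OF g] cS.cd_pos[OF g le] cS.cd_contr[OF g le] by auto
  have dom: "g x \<le> cone_dist P x" if "pos_contr_functional UNIV P g" for g x
  proof (rule cP.cd_greatest)
    fix q assume q: "q \<in> P"
    have "g x \<le> g x + g q" using that q unfolding pos_contr_functional_def by auto
    also have "\<dots> = g (x + q)" using that unfolding pos_contr_functional_def by auto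
    also have "\<dots> \<le> norm (x + q)" proof -
      have "\<bar>g (x+q)\<bar> \<le> norm (x+q)" using that unfolding pos_contr_functional_def by blast
      thus ?thesis by linarith
    qed
    finally show "g x \<le> norm (x + q)" .
  qed
  show ?thesis
  proof
    assume H: "\<forall>f. pos_contr_functional S P f \<longrightarrow>
            (\<exists>g. linear g \<and> pos_contr_functional UNIV P g \<and> (\<forall>x\<in>S. g x = f x))"
    show "\<forall>x\<in>S. cone_dist P x = cone_dist (S \<inter> P) x"
    proof
      fix x0 assume x0S: "x0 \<in> S"
      show "cone_dist P x0 = cone_dist (S \<inter> P) x0"
      proof (rule antisym[OF triv])
        show "cone_dist (S \<inter> P) x0 \<le> cone_dist P x0"
        proof (cases "x0 = 0")
          case True
          thus ?thesis using cS.cd_norm[of x0] cP.cd_nonneg[of x0] by simp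
        next
          case nz: False
          define d where "d = cone_dist (S \<inter> P) x0"
          define f0 where "f0 y = (THE t. y = t *\<^sub>R x0) * d" for y
          have f0t: "f0 (t *\<^sub>R x0) = t * d" for t
          proof -
            have "(THE s. t *\<^sub>R x0 = s *\<^sub>R x0) = t"
              by (rule the_equality) (use nz in auto)
            thus ?thesis unfolding f0_def by simp
          qed
          define L where "L = range (\<lambda>t. t *\<^sub>R x0)"
          have L: "subspace L" unfolding L_def subspace_def
          proof (intro conjI ballI allI)
            show "0 \<in> range (\<lambda>t. t *\<^sub>R x0)" by (rule range_eqI[of _ _ 0]) simp
          next
            fix x y assume "x \<in> range (\<lambda>t. t *\<^sub>R x0)" "y \<in> range (\<lambda>t. t *\<^sub>R x0)"
            then obtain a b where "x = a *\<^sub>R x0" "y = b *\<^sub>R x0" by auto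
            thus "x + y \<in> range (\<lambda>t. t *\<^sub>R x0)" by (auto intro!: range_eqI[of _ _ "a+b"] simp: scaleR_add_left)
          next
            fix c x assume "x \<in> range (\<lambda>t. t *\<^sub>R x0)"
            then obtain a where "x = a *\<^sub>R x0" by auto
            thus "c *\<^sub>R x \<in> range (\<lambda>t. t *\<^sub>R x0)" by (auto intro!: range_eqI[of _ _ "c*a"])
          qed
          have "\<exists>g. linear g \<and> (\<forall>x. g x \<le> cone_dist (S \<inter> P) x) \<and> (\<forall>x\<in>L. g x = f0 x)"
          proof (rule hahn_banach_alg[OF L cS.cd_add cS.cd_scale])
            fix x y assume "x \<in> L" "y \<in> L"
            then obtain a b where "x = a *\<^sub>R x0" "y = b *\<^sub>R x0" unfolding L_def by auto
            hence "x + y = (a+b) *\<^sub>R x0" by (simp add: scaleR_add_left)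
            thus "f0 (x + y) = f0 x + f0 y" using \<open>x = a *\<^sub>R x0\<close> \<open>y = b *\<^sub>R x0\<close> by (simp add: f0t distrib_right)
          next
            fix c x assume "x \<in> L"
            then obtain a where "x = a *\<^sub>R x0" unfolding L_def by auto
            thus "f0 (c *\<^sub>R x) = c * f0 x" by (simp add: f0t)
          next
            fix x assume "x \<in> L"
            then obtain t where x: "x = t *\<^sub>R x0" unfolding L_def by auto
            have "t * d \<le> cone_dist (S \<inter> P) (t *\<^sub>R x0)"
            proof (cases "t > 0")
              case True thus ?thesis by (simp add: cS.cd_scale d_def)
            next
              case False
              have "t * d \<le> 0" using False cS.cd_nonneg[of x0] unfolding d_def
                by (simp add: mult_nonpos_nonneg)
              thus ?thesis using cS.cd_nonneg[of "t *\<^sub>R x0"] by linarith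
            qed
            thus "f0 x \<le> cone_dist (S \<inter> P) x" using x f0t by simp
          qed
          then obtain g1 where g1: "linear g1" "\<And>x. g1 x \<le> cone_dist (S \<inter> P) x" "\<forall>x\<in>L. g1 x = f0 x"
            by blast
          have g1x0: "g1 x0 = d" using g1(3) f0t[of 1] unfolding L_def by (metis rangeI scaleR_one mult_1)
          from H lin_pcS[OF g1(1,2)] obtain g where g: "linear g" "pos_contr_functional UNIV P g"
            "\<forall>x\<in>S. g x = g1 x" by blast
          have "g x0 = d" using g(3) x0S g1x0 by simp
          thus ?thesis using dom[OF g(2), of x0] d_def by simp
        qed
      qed
    qed
  next
    assume E: "\<forall>x\<in>S. cone_dist P x = cone_dist (S \<inter> P) x"
    show "\<forall>f. pos_contr_functional S P f \<longrightarrow>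
            (\<exists>g. linear g \<and> pos_contr_functional UNIV P g \<and> (\<forall>x\<in>S. g x = f x))"
    proof (intro allI impI)
      fix f assume pf: "pos_contr_functional S P f"
      have fadd: "\<And>x y. x\<in>S \<Longrightarrow> y\<in>S \<Longrightarrow> f (x+y) = f x + f y"
        and fscale: "\<And>c x. x\<in>S \<Longrightarrow> f (c *\<^sub>R x) = c * f x"
        and fpos: "\<And>q. q \<in> S \<inter> P \<Longrightarrow> 0 \<le> f q"
        and fc: "\<And>x. x \<in> S \<Longrightarrow> \<bar>f x\<bar> \<le> norm x"
        using pf unfolding pos_contr_functional_def by auto
      have fle: "f x \<le> cone_dist P x" if xS: "x \<in> S" for x
      proof -
        have "f x \<le> cone_dist (S \<inter> P) x"
        proof (rule cS.cd_greatest)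
          fix q assume q: "q \<in> S \<inter> P"
          have "f x \<le> f x + f q" using fpos[OF q] by simp
          also have "\<dots> = f (x + q)" using fadd[OF xS] q by simp
          also have "\<dots> \<le> norm (x + q)" using fc[of "x+q"] q xS S subspace_add by fastforce
          finally show "f x \<le> norm (x + q)" .
        qed
        thus ?thesis using E xS by simp
      qed
      obtain g where g: "linear g" "\<And>x. g x \<le> cone_dist P x" "\<forall>x\<in>S. g x = f x"
        using hahn_banach_alg[OF S cP.cd_add cP.cd_scale fadd fscale fle] by blast
      show "\<exists>g. linear g \<and> pos_contr_functional UNIV P g \<and> (\<forall>x\<in>S. g x = f x)"
        using g lin_pc[OF g(1,2)] by blast
    qed
  qed
qed

end
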